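(* If $G=(V,E)$ is a finite bipartite graph, then with $\mathbf{x}(z)$ defined from the LABP limits as below, $$\lim_{z\to\infty}\sum_{e\in E}x_e(z)=\nu(G)=\tau(G),$$ i.e. LABP computes the matching number, which equals the vertex cover number.
   Context: $\vec E$ denotes the directed edges of $G$, $\partial u$ the neighbours of $u$, empty sums are $0$. LABP: $m^0_{\vec e}(z)=0$, $m^{t+1}_{u\to v}(z)=z/(1+\sum_{w\in\partial u\setminus v}m^t_{w\to u}(z))$; $Y_{\vec e}(z)=\lim_t m^t_{\vec e}(z)$; $x_e(z)=Y_{\vec e}(z)Y_{-\vec e}(z)/(z+Y_{\vec e}(z)Y_{-\vec e}(z))$ for either orientation $\vec e$ of $e$. $\nu(G)$ is the maximum size of a matching and $\tau(G)$ the minimum size of a vertex cover. *)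

theory Defs
  imports Complex_Main
begin

definition simple_graph :: "'a set \<Rightarrow> 'a set set \<Rightarrow> bool" where
  "simple_graph V E \<longleftrightarrow> finite V \<and>
     (\<forall>e\<in>E. \<exists>u v. u \<in> V \<and> v \<in> V \<and> u \<noteq> v \<and> e = {u, v})"

definition bipartite :: "'a set \<Rightarrow> 'a set set \<Rightarrow> bool" where
  "bipartite V E \<longleftrightarrow> (\<exists>A B. A \<union> B = V \<and> A \<inter> B = {} \<and>
     (\<forall>e\<in>E. \<exists>a\<in>A. \<exists>b\<in>B. e = {a, b}))"

definition nbrs :: "'a set set \<Rightarrow> 'a \<Rightarrow> 'a set" where
  "nbrs E u = {w. {u, w} \<in> E}"

definition dir_edges :: "'a set set \<Rightarrow> ('a \<times> 'a) set" where
  "dir_edges E = {(u, v). {u, v} \<in> E}"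

definition is_matching :: "'a set set \<Rightarrow> 'a set set \<Rightarrow> bool" where
  "is_matching E M \<longleftrightarrow> M \<subseteq> E \<and> (\<forall>e\<in>M. \<forall>f\<in>M. e \<noteq> f \<longrightarrow> e \<inter> f = {})"

definition matching_number :: "'a set set \<Rightarrow> nat" where
  "matching_number E = Max {card M | M. is_matching E M}"

definition is_vertex_cover :: "'a set \<Rightarrow> 'a set set \<Rightarrow> 'a set \<Rightarrow> bool" where
  "is_vertex_cover V E C \<longleftrightarrow> C \<subseteq> V \<and> (\<forall>e\<in>E. e \<inter> C \<noteq> {})"

definition vertex_cover_number :: "'a set \<Rightarrow> 'a set set \<Rightarrow> nat" where
  "vertex_cover_number V E = Min {card C | C. is_vertex_cover V E C}"

text \<open>LABP messages: labp_msg E t z u v is m^t_{u->v}(z).\<close>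
primrec labp_msg :: "'a set set \<Rightarrow> nat \<Rightarrow> real \<Rightarrow> 'a \<Rightarrow> 'a \<Rightarrow> real" where
  "labp_msg E 0 z u v = 0"
| "labp_msg E (Suc t) z u v =
     z / (1 + (\<Sum>w\<in>nbrs E u - {v}. labp_msg E t z w u))"

definition labp_Y :: "'a set set \<Rightarrow> real \<Rightarrow> 'a \<Rightarrow> 'a \<Rightarrow> real" where
  "labp_Y E z u v = lim (\<lambda>t. labp_msg E t z u v)"

definition labp_x_dir :: "'a set set \<Rightarrow> real \<Rightarrow> 'a \<Rightarrow> 'a \<Rightarrow> real" where
  "labp_x_dir E z u v =
     labp_Y E z u v * labp_Y E z v u / (z + labp_Y E z u v * labp_Y E z v u)"

definition labp_x :: "'a set set \<Rightarrow> real \<Rightarrow> 'a set \<Rightarrow> real" where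
  "labp_x E z e = (case (SOME p. e = {fst p, snd p}) of (u, v) \<Rightarrow> labp_x_dir E z u v)"

end

theory Submission
  imports Defs
begin

definition NB :: "'a set set \<Rightarrow> 'a set \<Rightarrow> 'a set \<Rightarrow> 'a set" where
  "NB E B X = {b\<in>B. \<exists>a\<in>X. {a,b} \<in> E}"

definition matching :: "'a set set \<Rightarrow> bool" where
  "matching M \<longleftrightarrow> (\<forall>e\<in>M. \<forall>f\<in>M. e \<noteq> f \<longrightarrow> e \<inter> f = {})"

lemma NB_mono: "X \<subseteq> Y \<Longrightarrow> NB E B X \<subseteq> NB E B Y"
  unfolding NB_def by blast

lemma NB_finite: "finite B \<Longrightarrow> finite (NB E B X)"
  unfolding NB_def by auto

lemma hall_defect:
  fixes A B :: "'a set" and E :: "'a set set" and d :: nat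
  assumes "finite A" "finite B" "A \<inter> B = {}" "\<forall>e\<in>E. \<exists>a\<in>A. \<exists>b\<in>B. e = {a,b}"
    "\<forall>X\<subseteq>A. card X \<le> card (NB E B X) + d"
  shows "\<exists>M. M \<subseteq> E \<and> matching M \<and> card A \<le> card M + d"
  using assms
proof (induction "card A" arbitrary: A B E d rule: less_induct)
  case less
  note fA = less.prems(1) and fB = less.prems(2) and dis = less.prems(3)
    and edg = less.prems(4) and hyp = less.prems(5)
  show ?case
  proof (cases "\<exists>X0. X0 \<noteq> {} \<and> X0 \<subset> A \<and> card X0 = card (NB E B X0) + d")
    case True
    then obtain X0 where X0: "X0 \<noteq> {}" "X0 \<subset> A" "card X0 = card (NB E B X0) + d" by blast
    define N0 where "N0 = NB E B X0"
    define E1 where "E1 = {e\<in>E. e \<subseteq> X0 \<union> N0}"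
    have fX0: "finite X0" using X0(2) fA finite_subset by blast
    have cX0: "card X0 < card A" using X0(2) fA psubset_card_mono by blast
    have N0B: "N0 \<subseteq> B" unfolding N0_def NB_def by auto
    have e1: "\<forall>e\<in>E1. \<exists>a\<in>X0. \<exists>b\<in>N0. e = {a,b}"
    proof
      fix e assume "e \<in> E1"
      then have eE: "e \<in> E" and sub: "e \<subseteq> X0 \<union> N0" unfolding E1_def by auto
      obtain a b where ab: "a \<in> A" "b \<in> B" "e = {a,b}" using edg eE by blast
      have "a \<notin> N0" using ab(1) N0B dis by blast
      hence "a \<in> X0" using sub ab by auto
      moreover have "b \<notin> X0" using ab(2) X0(2) dis by blast
      hence "b \<in> N0" using sub ab by auto
      ultimately show "\<exists>a\<in>X0. \<exists>b\<in>N0. e = {a,b}" using ab by blast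
    qed
    have h1: "\<forall>Y\<subseteq>X0. card Y \<le> card (NB E1 N0 Y) + d"
    proof (intro allI impI)
      fix Y assume Y: "Y \<subseteq> X0"
      have "NB E1 N0 Y = NB E B Y"
      proof
        show "NB E1 N0 Y \<subseteq> NB E B Y" unfolding NB_def E1_def N0_def NB_def by auto
        show "NB E B Y \<subseteq> NB E1 N0 Y"
        proof
          fix b assume "b \<in> NB E B Y"
          then obtain a where a: "a \<in> Y" "{a,b} \<in> E" "b \<in> B" unfolding NB_def by auto
          have bN: "b \<in> N0" unfolding N0_def NB_def using a Y by auto
          have "{a,b} \<in> E1" unfolding E1_def using a bN Y by auto
          then show "b \<in> NB E1 N0 Y" unfolding NB_def using a bN by auto
        qed
      qed
      then show "card Y \<le> card (NB E1 N0 Y) + d" using hyp Y X0(2) by auto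
    qed
    have dis1: "X0 \<inter> N0 = {}" using X0(2) N0B dis by blast
    obtain M1 where M1: "M1 \<subseteq> E1" "matching M1" "card X0 \<le> card M1 + d"
      using less.hyps[OF cX0 fX0 finite_subset[OF N0B fB] dis1 e1 h1] by blast
    define A2 where "A2 = A - X0"
    define B2 where "B2 = B - N0"
    define E2 where "E2 = {e\<in>E. e \<subseteq> A2 \<union> B2}"
    have cA2: "card A2 < card A" unfolding A2_def using X0 fA
      by (intro psubset_card_mono) auto
    have e2: "\<forall>e\<in>E2. \<exists>a\<in>A2. \<exists>b\<in>B2. e = {a,b}"
    proof
      fix e assume "e \<in> E2"
      then have eE: "e \<in> E" and sub: "e \<subseteq> A2 \<union> B2" unfolding E2_def by auto
      obtain a b where ab: "a \<in> A" "b \<in> B" "e = {a,b}" using edg eE by blast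
      have "a \<notin> B2" using ab(1) dis unfolding B2_def by blast
      hence "a \<in> A2" using sub ab by auto
      moreover have "b \<notin> A2" using ab(2) dis unfolding A2_def by blast
      hence "b \<in> B2" using sub ab by auto
      ultimately show "\<exists>a\<in>A2. \<exists>b\<in>B2. e = {a,b}" using ab by blast
    qed
    have h2: "\<forall>Y\<subseteq>A2. card Y \<le> card (NB E2 B2 Y) + 0"
    proof (intro allI impI)
      fix Y assume Y: "Y \<subseteq> A2"
      have fY: "finite Y" using Y fA unfolding A2_def using finite_subset by blast
      have sub: "NB E B (Y \<union> X0) \<subseteq> NB E2 B2 Y \<union> N0"
      proof
        fix b assume "b \<in> NB E B (Y \<union> X0)"
        then obtain a where a: "a \<in> Y \<union> X0" "{a,b} \<in> E" "b \<in> B" unfolding NB_def by auto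
        show "b \<in> NB E2 B2 Y \<union> N0"
        proof (cases "b \<in> N0")
          case False
          then have aY: "a \<in> Y" using a unfolding N0_def NB_def by auto
          have "b \<in> B2" using False a unfolding B2_def by auto
          moreover have "{a,b} \<in> E2" unfolding E2_def using a aY Y \<open>b \<in> B2\<close> by auto
          ultimately show ?thesis unfolding NB_def using aY by auto
        qed auto
      qed
      have "Y \<union> X0 \<subseteq> A" using Y X0(2) unfolding A2_def by auto
      then have "card (Y \<union> X0) \<le> card (NB E B (Y \<union> X0)) + d" using hyp by blast
      also have "card (NB E B (Y \<union> X0)) \<le> card (NB E2 B2 Y \<union> N0)"
        using sub fB by (intro card_mono) (auto intro!: NB_finite simp: N0_def B2_def)
      also have "\<dots> \<le> card (NB E2 B2 Y) + card N0" by (rule card_Un_le)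
      finally have "card (Y \<union> X0) \<le> card (NB E2 B2 Y) + card N0 + d" by simp
      moreover have "card (Y \<union> X0) = card Y + card X0"
        using Y fY fX0 unfolding A2_def by (subst card_Un_disjoint) auto
      ultimately show "card Y \<le> card (NB E2 B2 Y) + 0" using X0(3) unfolding N0_def by simp
    qed
    have dis2: "A2 \<inter> B2 = {}" using dis unfolding A2_def B2_def by blast
    obtain M2 where M2: "M2 \<subseteq> E2" "matching M2" "card A2 \<le> card M2 + 0"
      using less.hyps[OF cA2 _ _ dis2 e2 h2] fA fB unfolding A2_def B2_def by blast
    have edges_ne: "\<forall>e\<in>E. e \<noteq> {}" using edg by blast
    have fE: "finite E"
    proof -
      have "E \<subseteq> (\<lambda>(a,b). {a,b}) ` (A \<times> B)" using edg by force
      then show ?thesis using fA fB finite_subset by blast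
    qed
    have cross: "\<forall>e\<in>M1. \<forall>f\<in>M2. e \<inter> f = {}"
    proof (intro ballI)
      fix e f assume "e \<in> M1" "f \<in> M2"
      then have "e \<subseteq> X0 \<union> N0" "f \<subseteq> A2 \<union> B2" using M1 M2 unfolding E1_def E2_def by auto
      moreover have "(X0 \<union> N0) \<inter> (A2 \<union> B2) = {}" using X0(2) N0B dis unfolding A2_def B2_def by blast
      ultimately show "e \<inter> f = {}" by blast
    qed
    have M12: "M1 \<inter> M2 = {}"
    proof (rule ccontr)
      assume "M1 \<inter> M2 \<noteq> {}"
      then obtain e where "e \<in> M1" "e \<in> M2" by blast
      moreover have "e \<noteq> {}" using edges_ne \<open>e \<in> M1\<close> M1(1) unfolding E1_def by auto
      ultimately show False using cross by blast
    qed
    have "M1 \<subseteq> E" using M1(1) unfolding E1_def by auto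
    then have fM1: "finite M1" using fE by (rule finite_subset)
    have "M2 \<subseteq> E" using M2(1) unfolding E2_def by auto
    then have fM2: "finite M2" using fE by (rule finite_subset)
    have "matching (M1 \<union> M2)" using M1(2) M2(2) cross unfolding matching_def by blast
    moreover have "M1 \<union> M2 \<subseteq> E" using M1(1) M2(1) unfolding E1_def E2_def by auto
    moreover have "card A \<le> card (M1 \<union> M2) + d"
    proof -
      have "card A2 = card A - card X0" unfolding A2_def using X0(2) fX0 by (simp add: card_Diff_subset)
      moreover have "card X0 \<le> card A" using X0(2) fA by (simp add: card_mono)
      ultimately have "card A = card X0 + card A2" by linarith
      moreover have "card (M1 \<union> M2) = card M1 + card M2" using fM1 fM2 M12 by (rule card_Un_disjoint)
      ultimately show ?thesis using M1(3) M2(3) by linarith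
    qed
    ultimately show ?thesis by blast
  next
    case False
    note nt = False
    show ?thesis
    proof (cases "card A \<le> d")
      case True
      then show ?thesis unfolding matching_def by (intro exI[of _ "{}"]) auto
    next
      case False
      have "card A \<le> card (NB E B A) + d" using hyp by blast
      then have "NB E B A \<noteq> {}" using False by auto
      then obtain a b where ab: "a \<in> A" "b \<in> B" "{a,b} \<in> E" unfolding NB_def by auto
      define A' where "A' = A - {a}"
      define B' where "B' = B - {b}"
      define E' where "E' = {e\<in>E. e \<subseteq> A' \<union> B'}"
      have cA': "card A' < card A" unfolding A'_def using ab(1) fA by (meson card_Diff1_less)
      have e': "\<forall>e\<in>E'. \<exists>a\<in>A'. \<exists>b\<in>B'. e = {a,b}"
      proof
        fix e assume "e \<in> E'"
        then have eE: "e \<in> E" and sub: "e \<subseteq> A' \<union> B'" unfolding E'_def by auto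
        obtain a b where ab: "a \<in> A" "b \<in> B" "e = {a,b}" using edg eE by blast
        have "a \<notin> B'" using ab(1) dis unfolding B'_def by blast
        hence "a \<in> A'" using sub ab by auto
        moreover have "b \<notin> A'" using ab(2) dis unfolding A'_def by blast
        hence "b \<in> B'" using sub ab by auto
        ultimately show "\<exists>a\<in>A'. \<exists>b\<in>B'. e = {a,b}" using ab by blast
      qed
      have h': "\<forall>X\<subseteq>A'. card X \<le> card (NB E' B' X) + d"
      proof (intro allI impI)
        fix X assume X: "X \<subseteq> A'"
        show "card X \<le> card (NB E' B' X) + d"
        proof (cases "X = {}")
          case True then show ?thesis by simp
        next
          case False
          have XA: "X \<subset> A" using X ab(1) unfolding A'_def by auto
          have l1: "card X \<le> card (NB E B X) + d" using hyp XA by auto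
          have l2: "card X \<noteq> card (NB E B X) + d" using nt False XA by blast
          have lt: "card X + 1 \<le> card (NB E B X) + d" using l1 l2 by linarith
          have sub: "NB E B X - {b} \<subseteq> NB E' B' X"
          proof
            fix c assume "c \<in> NB E B X - {b}"
            then obtain a' where a': "a' \<in> X" "{a',c} \<in> E" "c \<in> B" "c \<noteq> b" unfolding NB_def by auto
            have "{a',c} \<in> E'" unfolding E'_def using a' X unfolding A'_def B'_def by auto
            then show "c \<in> NB E' B' X" unfolding NB_def B'_def using a' by auto
          qed
          have "card (NB E B X) - 1 \<le> card (NB E B X - {b})" using diff_card_le_card_Diff[of "{b}" "NB E B X"] by simp
          also have "\<dots> \<le> card (NB E' B' X)"
            using sub by (intro card_mono) (auto intro!: NB_finite simp: B'_def fB)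
          finally show ?thesis using lt by linarith
        qed
      qed
      have dis': "A' \<inter> B' = {}" using dis unfolding A'_def B'_def by blast
      obtain M' where M': "M' \<subseteq> E'" "matching M'" "card A' \<le> card M' + d"
        using less.hyps[OF cA' _ _ dis' e' h'] fA fB unfolding A'_def B'_def by blast
      have fE: "finite E"
      proof -
        have "E \<subseteq> (\<lambda>(a,b). {a,b}) ` (A \<times> B)" using edg by force
        then show ?thesis using fA fB finite_subset by blast
      qed
      have "M' \<subseteq> E" using M'(1) unfolding E'_def by auto
      then have fM': "finite M'" using fE by (rule finite_subset)
      have disj: "\<forall>f\<in>M'. {a,b} \<inter> f = {}" using M'(1) dis ab(1,2) unfolding E'_def A'_def B'_def by blast
      have nin: "{a,b} \<notin> M'" using disj by auto
      have "matching (insert {a,b} M')" using M'(2) disj unfolding matching_def by blast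
      moreover have "insert {a,b} M' \<subseteq> E" using M'(1) ab(3) unfolding E'_def by auto
      moreover have "card A \<le> card (insert {a,b} M') + d"
        using M'(3) fM' nin cA' unfolding A'_def using ab(1) fA by (simp add: card_Diff_singleton)
      ultimately show ?thesis by blast
    qed
  qed
qed

lemma koenig_cover:
  fixes A B :: "'a set" and E :: "'a set set"
  assumes fA: "finite A" and fB: "finite B" and dis: "A \<inter> B = {}"
    and edg: "\<forall>e\<in>E. \<exists>a\<in>A. \<exists>b\<in>B. e = {a,b}"
  shows "\<exists>M C. M \<subseteq> E \<and> matching M \<and> C \<subseteq> A \<union> B \<and> (\<forall>e\<in>E. e \<inter> C \<noteq> {}) \<and> card C \<le> card M"
proof -
  define \<phi> where "\<phi> X = int (card X) - int (card (NB E B X))" for X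
  have fin: "finite (\<phi> ` Pow A)" using fA by simp
  have ne: "\<phi> ` Pow A \<noteq> {}" by auto
  define m where "m = Max (\<phi> ` Pow A)"
  obtain Xs where Xs: "Xs \<in> Pow A" "\<phi> Xs = m" using Max_in[OF fin ne] unfolding m_def by auto
  have mx: "\<phi> X \<le> m" if "X \<subseteq> A" for X using Max_ge[OF fin] that unfolding m_def by auto
  have m0: "0 \<le> m" using mx[of "{}"] unfolding \<phi>_def NB_def by simp
  define d where "d = nat m"
  have hyp: "\<forall>X\<subseteq>A. card X \<le> card (NB E B X) + d"
  proof (intro allI impI)
    fix X assume "X \<subseteq> A"
    then have "\<phi> X \<le> m" by (rule mx)
    then show "card X \<le> card (NB E B X) + d" unfolding \<phi>_def d_def using m0 by linarith
  qed
  obtain M where M: "M \<subseteq> E" "matching M" "card A \<le> card M + d"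
    using hall_defect[OF fA fB dis edg hyp] by blast
  define C where "C = (A - Xs) \<union> NB E B Xs"
  have "C \<subseteq> A \<union> B" unfolding C_def NB_def by auto
  moreover have "\<forall>e\<in>E. e \<inter> C \<noteq> {}"
  proof
    fix e assume "e \<in> E"
    then obtain a b where ab: "a \<in> A" "b \<in> B" "e = {a,b}" using edg by blast
    show "e \<inter> C \<noteq> {}"
    proof (cases "a \<in> Xs")
      case True
      then have "b \<in> NB E B Xs" unfolding NB_def using ab \<open>e \<in> E\<close> by auto
      then show ?thesis unfolding C_def using ab by auto
    next
      case False
      then show ?thesis unfolding C_def using ab by auto
    qed
  qed
  moreover have "card C \<le> card M"
  proof -
    have fX: "finite Xs" using Xs(1) fA finite_subset by auto
    have "card C \<le> card (A - Xs) + card (NB E B Xs)" unfolding C_def by (rule card_Un_le)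
    moreover have "card (A - Xs) = card A - card Xs" using Xs(1) fX by (simp add: card_Diff_subset)
    moreover have "card Xs \<le> card A" using Xs(1) fA by (simp add: card_mono)
    moreover have "int (card Xs) - int (card (NB E B Xs)) = int d" using Xs(2) m0 unfolding \<phi>_def d_def by simp
    ultimately show ?thesis using M(3) by linarith
  qed
  ultimately show ?thesis using M by blast
qed

lemma sequentially_even_odd':
  assumes E: "eventually (\<lambda>n. P (2 * n)) sequentially" and O: "eventually (\<lambda>n. P (2 * n + 1)) sequentially"
  shows "eventually P sequentially"
proof -
  from E obtain n_e where [intro]: "\<And>n. n \<ge> n_e \<Longrightarrow> P (2 * n)"
    by (auto simp: eventually_sequentially)
  moreover
  from O obtain n_o where [intro]: "\<And>n. n \<ge> n_o \<Longrightarrow> P (Suc (2 * n))"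
    by (auto simp: eventually_sequentially)
  show ?thesis
    unfolding eventually_sequentially
  proof (intro exI allI impI)
    fix n assume "max (2 * n_e) (2 * n_o + 1) \<le> n" then show "P n"
      by (cases "even n") (auto elim!: evenE oddE )
  qed
qed

lemma limseq_even_odd':
  assumes "(\<lambda>n. f (2 * n)) \<longlonglongrightarrow> (l :: 'a :: topological_space)"
      and "(\<lambda>n. f (2 * n + 1)) \<longlonglongrightarrow> l"
  shows "f \<longlonglongrightarrow> l"
  using assms by (auto simp: filterlim_iff intro: sequentially_even_odd')

definition Fop :: "'a set set \<Rightarrow> real \<Rightarrow> ('a \<Rightarrow> 'a \<Rightarrow> real) \<Rightarrow> 'a \<Rightarrow> 'a \<Rightarrow> real" where
  "Fop E z m u v = z / (1 + (\<Sum>w\<in>nbrs E u - {v}. m w u))"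

lemma msg_Suc: "labp_msg E (Suc t) z u v = Fop E z (labp_msg E t z) u v"
  by (simp add: Fop_def)

lemma msg_bounds:
  assumes "0 < z"
  shows "0 \<le> labp_msg E t z u v \<and> labp_msg E t z u v \<le> z"
proof (induction t arbitrary: u v)
  case 0 then show ?case using assms by simp
next
  case (Suc t)
  have S: "0 \<le> (\<Sum>w\<in>nbrs E u - {v}. labp_msg E t z w u)" using Suc by (simp add: sum_nonneg)
  have "z / (1 + (\<Sum>w\<in>nbrs E u - {v}. labp_msg E t z w u)) \<le> z"
    using S assms by (simp add: divide_le_eq)
  moreover have "0 \<le> z / (1 + (\<Sum>w\<in>nbrs E u - {v}. labp_msg E t z w u))"
    using S assms by simp
  ultimately show ?case by simp
qed

lemma msg_nonneg: "0 < z \<Longrightarrow> 0 \<le> labp_msg E t z u v" using msg_bounds[of z E t u v] by blast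
lemma msg_le: "0 < z \<Longrightarrow> labp_msg E t z u v \<le> z" using msg_bounds[of z E t u v] by blast

lemma Fop_anti:
  assumes "0 < z" "\<And>a b. 0 \<le> p a b" "\<And>a b. p a b \<le> q a b"
  shows "Fop E z q u v \<le> Fop E z p u v"
proof -
  have S: "0 \<le> (\<Sum>w\<in>nbrs E u - {v}. p w u)" using assms by (simp add: sum_nonneg)
  have T: "(\<Sum>w\<in>nbrs E u - {v}. p w u) \<le> (\<Sum>w\<in>nbrs E u - {v}. q w u)"
    using assms by (intro sum_mono) auto
  show ?thesis unfolding Fop_def using S T assms(1)
    by (intro divide_left_mono) (auto simp: mult_pos_pos)
qed

lemma msg_step_anti:
  assumes "0 < z" "\<forall>u v. labp_msg E s z u v \<le> labp_msg E t z u v"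
  shows "labp_msg E (Suc t) z u v \<le> labp_msg E (Suc s) z u v"
  unfolding msg_Suc using assms msg_nonneg[OF assms(1)] by (intro Fop_anti[OF assms(1)]) auto

lemma msg_mono:
  assumes z: "0 < z"
  shows "(\<forall>u v. labp_msg E (2*k) z u v \<le> labp_msg E (Suc (Suc (2*k))) z u v) \<and>
         (\<forall>u v. labp_msg E (Suc (Suc (Suc (2*k)))) z u v \<le> labp_msg E (Suc (2*k)) z u v)"
proof (induction k)
  case 0
  have a: "\<forall>u v. labp_msg E (2*0) z u v \<le> labp_msg E (Suc (Suc (2*0))) z u v"
  proof (intro allI)
    fix u v show "labp_msg E (2*0) z u v \<le> labp_msg E (Suc (Suc (2*0))) z u v"
      using msg_nonneg[OF z, of E "Suc (Suc 0)" u v] by (simp only: mult_0_right labp_msg.simps(1))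
  qed
  have "\<forall>u v. labp_msg E (Suc (Suc (Suc (2*0)))) z u v \<le> labp_msg E (Suc (2*0)) z u v"
    by (intro allI msg_step_anti[OF z a])
  then show ?case by (intro conjI[OF a])
next
  case (Suc k)
  have a: "\<forall>u v. labp_msg E (2*Suc k) z u v \<le> labp_msg E (Suc (Suc (2*Suc k))) z u v"
  proof -
    have e: "2 * Suc k = Suc (Suc (2*k))" by simp
    show ?thesis unfolding e by (intro allI msg_step_anti[OF z] conjunct2[OF Suc.IH])
  qed
  have "\<forall>u v. labp_msg E (Suc (Suc (Suc (2*Suc k)))) z u v \<le> labp_msg E (Suc (2*Suc k)) z u v"
    by (intro allI msg_step_anti[OF z a])
  then show ?case by (intro conjI[OF a])
qed

definition lo :: "'a set set \<Rightarrow> real \<Rightarrow> 'a \<Rightarrow> 'a \<Rightarrow> real" where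
  "lo E z u v = lim (\<lambda>k. labp_msg E (2*k) z u v)"
definition up :: "'a set set \<Rightarrow> real \<Rightarrow> 'a \<Rightarrow> 'a \<Rightarrow> real" where
  "up E z u v = lim (\<lambda>k. labp_msg E (Suc (2*k)) z u v)"

lemma even_lim:
  assumes z: "0 < z"
  shows "(\<lambda>k. labp_msg E (2*k) z u v) \<longlonglongrightarrow> lo E z u v"
proof -
  have "incseq (\<lambda>k. labp_msg E (2*k) z u v)"
  proof (rule incseq_SucI)
    fix k
    have e: "2 * Suc k = Suc (Suc (2*k))" by simp
    show "labp_msg E (2*k) z u v \<le> labp_msg E (2*Suc k) z u v"
      unfolding e using msg_mono[OF z, of E k] by blast
  qed
  then obtain L where "(\<lambda>k. labp_msg E (2*k) z u v) \<longlonglongrightarrow> L"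
    using incseq_convergent[of _ z] msg_le[OF z] by metis
  then show ?thesis unfolding lo_def using limI by metis
qed

lemma odd_lim:
  assumes z: "0 < z"
  shows "(\<lambda>k. labp_msg E (Suc (2*k)) z u v) \<longlonglongrightarrow> up E z u v"
proof -
  have "decseq (\<lambda>k. labp_msg E (Suc (2*k)) z u v)"
  proof (rule decseq_SucI)
    fix k
    have e: "Suc (2 * Suc k) = Suc (Suc (Suc (2*k)))" by simp
    show "labp_msg E (Suc (2*Suc k)) z u v \<le> labp_msg E (Suc (2*k)) z u v"
      unfolding e using msg_mono[OF z, of E k] by blast
  qed
  then obtain L where "(\<lambda>k. labp_msg E (Suc (2*k)) z u v) \<longlonglongrightarrow> L"
    using decseq_convergent[of _ 0] msg_nonneg[OF z] by metis
  then show ?thesis unfolding up_def using limI by metis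
qed

lemma lo_nonneg: "0 < z \<Longrightarrow> 0 \<le> lo E z u v"
  by (rule LIMSEQ_le_const[OF even_lim]) (assumption, intro exI allI impI msg_nonneg)

lemma up_nonneg: "0 < z \<Longrightarrow> 0 \<le> up E z u v"
  by (rule LIMSEQ_le_const[OF odd_lim]) (assumption, intro exI allI impI msg_nonneg)

lemma Fop_tendsto:
  assumes "0 < z" "\<And>w. (\<lambda>k. f k w u) \<longlonglongrightarrow> g w u" "\<And>w. 0 \<le> g w u"
  shows "(\<lambda>k. Fop E z (f k) u v) \<longlonglongrightarrow> Fop E z g u v"
proof -
  have "0 \<le> (\<Sum>w\<in>nbrs E u - {v}. g w u)" using assms(3) by (simp add: sum_nonneg)
  then have ne: "1 + (\<Sum>w\<in>nbrs E u - {v}. g w u) \<noteq> 0" by linarith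
  show ?thesis unfolding Fop_def
    by (intro tendsto_divide tendsto_const tendsto_add tendsto_sum assms(2) ne)
qed

lemma up_eq: 
  assumes z: "0 < z"
  shows "up E z u v = Fop E z (lo E z) u v"
proof -
  have "(\<lambda>k. labp_msg E (Suc (2*k)) z u v) \<longlonglongrightarrow> Fop E z (lo E z) u v"
    unfolding msg_Suc by (rule Fop_tendsto[where f="\<lambda>k. labp_msg E (2*k) z" and g="lo E z", OF z even_lim[OF z] lo_nonneg[OF z]])
  then show ?thesis using odd_lim[OF z] LIMSEQ_unique by metis
qed

lemma lo_eq: 
  assumes z: "0 < z"
  shows "lo E z u v = Fop E z (up E z) u v"
proof -
  have e: "\<And>k. 2 * Suc k = Suc (Suc (2*k))" by simp
  have "(\<lambda>k. labp_msg E (2 * Suc k) z u v) \<longlonglongrightarrow> Fop E z (up E z) u v"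
    unfolding e msg_Suc[of E "Suc (2*_)"] by (rule Fop_tendsto[where f="\<lambda>k. labp_msg E (Suc (2*k)) z" and g="up E z", OF z odd_lim[OF z] up_nonneg[OF z]])
  moreover have "(\<lambda>k. labp_msg E (2 * Suc k) z u v) \<longlonglongrightarrow> lo E z u v"
    using LIMSEQ_Suc[OF even_lim[OF z]] by simp
  ultimately show ?thesis using LIMSEQ_unique by metis
qed

declare labp_msg.simps(2)[simp del]

lemma nbrs_finite:
  assumes "finite E" "\<forall>e\<in>E. finite e"
  shows "finite (nbrs E u)"
proof -
  have "nbrs E u \<subseteq> \<Union>E" unfolding nbrs_def by auto
  then show ?thesis using assms finite_subset by blast
qed

lemma ratio_le:
  fixes a b :: "'a \<Rightarrow> 'a \<Rightarrow> real"
  assumes z: "0 < z" and fE: "finite E" and fe: "\<forall>e\<in>E. finite e"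
    and pos: "\<And>u v. {u,v} \<in> E \<Longrightarrow> 0 < a u v \<and> 0 < b u v"
    and eqa: "\<And>u v. {u,v} \<in> E \<Longrightarrow> a u v = Fop E z b u v"
    and eqb: "\<And>u v. {u,v} \<in> E \<Longrightarrow> b u v = Fop E z a u v"
    and uv: "{u0,v0} \<in> E"
  shows "a u0 v0 \<le> b u0 v0"
proof (rule ccontr)
  assume "\<not> a u0 v0 \<le> b u0 v0"
  then have gt: "b u0 v0 < a u0 v0" by simp
  define D where "D = {p. {fst p, snd p} \<in> E}"
  have "D \<subseteq> \<Union>E \<times> \<Union>E" unfolding D_def by auto
  then have fD: "finite D" using fE fe finite_subset by (metis finite_Union finite_SigmaI)
  define R where "R p = a (fst p) (snd p) / b (fst p) (snd p)" for p
  have p0: "(u0,v0) \<in> D" using uv unfolding D_def by simp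
  define r where "r = Max (R ` D)"
  have rge: "R p \<le> r" if "p \<in> D" for p unfolding r_def using fD that by simp
  obtain p where p: "p \<in> D" "R p = r" unfolding r_def using fD p0 Max_in[of "R ` D"] by fastforce
  have r1: "1 < r"
  proof -
    have "1 < R (u0,v0)" unfolding R_def using gt pos[OF uv] by simp
    then show ?thesis using rge[OF p0] by linarith
  qed
  obtain u v where puv: "p = (u,v)" by (cases p)
  have uvE: "{u,v} \<in> E" using p(1) puv unfolding D_def by simp
  define N where "N = nbrs E u - {v}"
  have fN: "finite N" unfolding N_def using nbrs_finite[OF fE fe] by simp
  have wE: "{w,u} \<in> E" if "w \<in> N" for w using that unfolding N_def nbrs_def by (simp add: insert_commute)
  have le: "a w u \<le> r * b w u" if "w \<in> N" for w
  proof -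
    have "R (w,u) \<le> r" using rge wE[OF that] unfolding D_def by simp
    then show ?thesis unfolding R_def using pos[OF wE[OF that]] by (simp add: divide_le_eq)
  qed
  define Sa where "Sa = (\<Sum>w\<in>N. a w u)"
  define Sb where "Sb = (\<Sum>w\<in>N. b w u)"
  have Sb0: "0 \<le> Sb" unfolding Sb_def using pos wE by (intro sum_nonneg) (simp add: less_imp_le)
  have Sa0: "0 \<le> Sa" unfolding Sa_def using pos wE by (intro sum_nonneg) (simp add: less_imp_le)
  have SaSb: "Sa \<le> r * Sb" unfolding Sa_def Sb_def sum_distrib_left using le by (intro sum_mono) auto
  have au: "a u v = z / (1 + Sb)" using eqa[OF uvE] unfolding Fop_def Sb_def N_def .
  have bu: "b u v = z / (1 + Sa)" using eqb[OF uvE] unfolding Fop_def Sa_def N_def .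
  have "R p = (z/(1+Sb)) / (z/(1+Sa))" unfolding R_def puv using au bu by simp
  also have "\<dots> = (1 + Sa) / (1 + Sb)" proof -
    have "1 + Sa \<noteq> 0" "1 + Sb \<noteq> 0" "z \<noteq> 0" using z Sa0 Sb0 by auto
    then show ?thesis by (simp add: divide_divide_eq_left divide_divide_eq_right)
  qed
  also have "\<dots> < r"
  proof -
    have "1 + Sa < r * (1 + Sb)" using SaSb r1 by (simp add: algebra_simps)
    then show ?thesis using Sb0 by (simp add: divide_less_eq)
  qed
  finally show False using p(2) by simp
qed

lemma labp_fixpoint:
  assumes z: "0 < z" and fE: "finite E" and fe: "\<forall>e\<in>E. finite e" and uv: "{u,v} \<in> E"
  shows "(\<lambda>t. labp_msg E t z u v) \<longlonglongrightarrow> lo E z u v" and "labp_Y E z u v = lo E z u v"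
    and "0 < labp_Y E z u v"
    and "labp_Y E z u v = z / (1 + (\<Sum>w\<in>nbrs E u - {v}. labp_Y E z w u))"
proof -
  have pos: "0 < lo E z u v \<and> 0 < up E z u v" for u v
  proof -
    have "0 \<le> (\<Sum>w\<in>nbrs E u - {v}. up E z w u)" by (intro sum_nonneg up_nonneg[OF z])
    then have "0 < lo E z u v" unfolding lo_eq[OF z] Fop_def using z by simp
    moreover have "0 \<le> (\<Sum>w\<in>nbrs E u - {v}. lo E z w u)" by (intro sum_nonneg lo_nonneg[OF z])
    then have "0 < up E z u v" unfolding up_eq[OF z] Fop_def using z by simp
    ultimately show ?thesis by simp
  qed
  have eq: "lo E z u v = up E z u v" if "{u,v} \<in> E" for u v
  proof -
    have "lo E z u v \<le> up E z u v"
      by (rule ratio_le[OF z fE fe _ _ _ that]) (use pos lo_eq[OF z] up_eq[OF z] in auto)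
    moreover have "up E z u v \<le> lo E z u v"
      by (rule ratio_le[OF z fE fe _ _ _ that]) (use pos lo_eq[OF z] up_eq[OF z] in auto)
    ultimately show ?thesis by simp
  qed
  have o: "(\<lambda>k. labp_msg E (Suc (2*k)) z u v) \<longlonglongrightarrow> lo E z u v" using odd_lim[OF z, of E u v] eq[OF uv] by simp
  show conv: "(\<lambda>t. labp_msg E t z u v) \<longlonglongrightarrow> lo E z u v"
    by (rule limseq_even_odd'[OF even_lim[OF z]]) (use o in simp)
  then show Y: "labp_Y E z u v = lo E z u v" unfolding labp_Y_def by (rule limI)
  then show "0 < labp_Y E z u v" using pos by simp
  have "lo E z u v = z / (1 + (\<Sum>w\<in>nbrs E u - {v}. up E z w u))" using lo_eq[OF z] unfolding Fop_def .
  also have "(\<Sum>w\<in>nbrs E u - {v}. up E z w u) = (\<Sum>w\<in>nbrs E u - {v}. labp_Y E z w u)"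
  proof (rule sum.cong[OF refl])
    fix w assume "w \<in> nbrs E u - {v}"
    then have wE: "{w,u} \<in> E" unfolding nbrs_def by (simp add: insert_commute)
    have o: "(\<lambda>k. labp_msg E (Suc (2*k)) z w u) \<longlonglongrightarrow> lo E z w u" using odd_lim[OF z, of E w u] eq[OF wE] by simp
    have "(\<lambda>t. labp_msg E t z w u) \<longlonglongrightarrow> lo E z w u"
      by (rule limseq_even_odd'[OF even_lim[OF z]]) (use o in simp)
    then have "labp_Y E z w u = lo E z w u" unfolding labp_Y_def by (rule limI)
    then show "up E z w u = labp_Y E z w u" using eq[OF wE] by simp
  qed
  finally show "labp_Y E z u v = z / (1 + (\<Sum>w\<in>nbrs E u - {v}. labp_Y E z w u))" using Y by simp
qed

definition Ssum :: "'a set set \<Rightarrow> real \<Rightarrow> 'a \<Rightarrow> real" where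
  "Ssum E z u = (\<Sum>w\<in>nbrs E u. labp_Y E z w u)"
definition Pv :: "'a set set \<Rightarrow> real \<Rightarrow> 'a \<Rightarrow> real" where
  "Pv E z u = 1 / (1 + Ssum E z u)"

locale sg =
  fixes V :: "'a set" and E :: "'a set set" and z :: real
  assumes sg: "simple_graph V E" and z: "0 < z"
begin

lemma fV: "finite V" using sg unfolding simple_graph_def by simp

lemma edge: "e \<in> E \<Longrightarrow> \<exists>u v. u \<in> V \<and> v \<in> V \<and> u \<noteq> v \<and> e = {u,v}"
  using sg unfolding simple_graph_def by blast

lemma fE: "finite E"
proof -
  have "E \<subseteq> Pow V" using edge by blast
  then show ?thesis using fV finite_subset by blast
qed

lemma fe: "\<forall>e\<in>E. finite e" using edge by blast

lemma fN: "finite (nbrs E u)" using nbrs_finite[OF fE fe] .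

lemma nbr_sym: "w \<in> nbrs E u \<Longrightarrow> {w,u} \<in> E" unfolding nbrs_def by (simp add: insert_commute)

lemma Ypos: "{u,v} \<in> E \<Longrightarrow> 0 < labp_Y E z u v"
  using labp_fixpoint(3)[OF z fE fe] by blast

lemma Yfix: "{u,v} \<in> E \<Longrightarrow> labp_Y E z u v = z / (1 + (\<Sum>w\<in>nbrs E u - {v}. labp_Y E z w u))"
  using labp_fixpoint(4)[OF z fE fe] by blast

lemma S_nonneg: "0 \<le> Ssum E z u"
  unfolding Ssum_def using Ypos nbr_sym by (intro sum_nonneg) (simp add: less_imp_le)

lemma P_pos: "0 < Pv E z u" unfolding Pv_def using S_nonneg[of u] by simp

lemma Y_le_S: "{u,v} \<in> E \<Longrightarrow> labp_Y E z v u \<le> Ssum E z u"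
proof -
  assume uv: "{u,v} \<in> E"
  then have "v \<in> nbrs E u" unfolding nbrs_def by simp
  then show ?thesis unfolding Ssum_def using fN Ypos nbr_sym
    by (intro member_le_sum) (auto simp: less_imp_le)
qed

lemma x_formula:
  assumes uv: "{u,v} \<in> E"
  shows "labp_x_dir E z u v = labp_Y E z v u * Pv E z u"
proof -
  have vN: "v \<in> nbrs E u" using uv unfolding nbrs_def by simp
  have vu: "{v,u} \<in> E" using uv by (simp add: insert_commute)
  define a where "a = labp_Y E z u v"
  define b where "b = labp_Y E z v u"
  define s where "s = Ssum E z u"
  have a0: "0 < a" unfolding a_def using Ypos[OF uv] .
  have b0: "0 < b" unfolding b_def using Ypos[OF vu] .
  have bs: "b \<le> s" unfolding b_def s_def using Y_le_S[OF uv] .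
  have "(\<Sum>w\<in>nbrs E u - {v}. labp_Y E z w u) = s - b"
    unfolding s_def b_def Ssum_def using sum_diff1[OF fN[of u], of "\<lambda>w. labp_Y E z w u" v] vN by simp
  then have "a = z / (1 + s - b)" unfolding a_def using Yfix[OF uv] by simp
  moreover have "0 < 1 + s - b" using bs by simp
  ultimately have az: "a * (1 + s - b) = z" by simp
  have s0: "0 \<le> s" unfolding s_def by (rule S_nonneg)
  have "labp_x_dir E z u v = a * b / (z + a * b)" unfolding labp_x_dir_def a_def b_def by simp
  also have "z + a * b = a * (1 + s)" using az by (simp add: algebra_simps)
  also have "a * b / (a * (1 + s)) = b / (1 + s)" using a0 s0 by simp
  also have "\<dots> = b * Pv E z u" unfolding Pv_def s_def by simp
  finally show ?thesis unfolding b_def .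
qed

lemma x_sym: "labp_x_dir E z u v = labp_x_dir E z v u"
  unfolding labp_x_dir_def by (simp add: mult.commute)

lemma x_bounds:
  assumes uv: "{u,v} \<in> E"
  shows "0 < labp_x_dir E z u v" "labp_x_dir E z u v < 1"
proof -
  have vu: "{v,u} \<in> E" using uv by (simp add: insert_commute)
  have b0: "0 < labp_Y E z v u" using Ypos[OF vu] .
  have bs: "labp_Y E z v u \<le> Ssum E z u" using Y_le_S[OF uv] .
  show "0 < labp_x_dir E z u v" unfolding x_formula[OF uv] using b0 P_pos by simp
  have "labp_Y E z v u * Pv E z u = labp_Y E z v u / (1 + Ssum E z u)" unfolding Pv_def by simp
  also have "\<dots> < 1" using bs S_nonneg[of u] by (simp add: divide_less_eq)
  finally show "labp_x_dir E z u v < 1" unfolding x_formula[OF uv] .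
qed

lemma x_sum: "(\<Sum>w\<in>nbrs E u. labp_x_dir E z u w) = 1 - Pv E z u"
proof -
  have "(\<Sum>w\<in>nbrs E u. labp_x_dir E z u w) = (\<Sum>w\<in>nbrs E u. labp_Y E z w u * Pv E z u)"
    by (rule sum.cong[OF refl]) (simp add: x_formula nbrs_def)
  also have "\<dots> = Ssum E z u * Pv E z u" unfolding Ssum_def by (simp add: sum_distrib_right)
  also have "\<dots> = 1 - Pv E z u" unfolding Pv_def using S_nonneg[of u] by (simp add: field_simps)
  finally show ?thesis .
qed

lemma x_rel:
  assumes uv: "{u,v} \<in> E"
  shows "labp_x_dir E z u v * (1 - labp_x_dir E z u v) = z * Pv E z u * Pv E z v"
proof -
  have vu: "{v,u} \<in> E" using uv by (simp add: insert_commute)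
  define a where "a = labp_Y E z u v"
  define b where "b = labp_Y E z v u"
  define x where "x = labp_x_dir E z u v"
  have a0: "0 < a" unfolding a_def using Ypos[OF uv] .
  have b0: "0 < b" unfolding b_def using Ypos[OF vu] .
  have xd: "x = a * b / (z + a * b)" unfolding x_def labp_x_dir_def a_def b_def by simp
  have x1: "x = b * Pv E z u" unfolding x_def b_def using x_formula[OF uv] .
  have x2: "x = a * Pv E z v" unfolding x_def a_def using x_formula[OF vu] x_sym by metis
  have Pu: "Pv E z u = x / b" using x1 b0 by simp
  have Pw: "Pv E z v = x / a" using x2 a0 by simp
  have "0 < a * b" using a0 b0 by simp
  then have zab: "0 < z + a * b" using z by linarith
  have "z * Pv E z u * Pv E z v = z * x * x / (a * b)" unfolding Pu Pw by simp
  also have "\<dots> = x * (1 - x)"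
  proof -
    define q where "q = z + a * b"
    have q0: "q \<noteq> 0" using zab unfolding q_def by simp
    have xq: "x = a * b / q" unfolding xd q_def ..
    have e1: "1 - x = z / q" unfolding xq using q0 unfolding q_def by (simp add: field_simps)
    show ?thesis unfolding e1 unfolding xq using q0 a0 b0 by (simp add: field_simps)
  qed
  finally show ?thesis unfolding x_def by simp
qed

lemma edge_ne: "{u,w} \<in> E \<Longrightarrow> u \<noteq> w"
  using edge[of "{u,w}"] by (force simp: doubleton_eq_iff)

lemma labp_x_edge:
  assumes uv: "{u,v} \<in> E"
  shows "labp_x E z {u,v} = labp_x_dir E z u v"
proof -
  define p where "p = (SOME p. {u,v} = {fst p, snd p})"
  have "{u,v} = {fst p, snd p}" unfolding p_def by (rule someI[of _ "(u,v)"]) simp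
  then have "(fst p = u \<and> snd p = v) \<or> (fst p = v \<and> snd p = u)" by (auto simp: doubleton_eq_iff)
  moreover have "labp_x E z {u,v} = labp_x_dir E z (fst p) (snd p)"
    unfolding labp_x_def p_def[symmetric] by (simp add: case_prod_beta)
  ultimately show ?thesis using x_sym[of v u] by (elim disjE) auto
qed

lemma vertex_sum: "(\<Sum>e\<in>{e\<in>E. u \<in> e}. labp_x E z e) = 1 - Pv E z u"
proof -
  have bij: "bij_betw (\<lambda>w. {u,w}) (nbrs E u) {e\<in>E. u \<in> e}"
  proof (rule bij_betwI')
    fix w w' assume "w \<in> nbrs E u" "w' \<in> nbrs E u"
    then have "u \<noteq> w" "u \<noteq> w'" using edge_ne unfolding nbrs_def by auto
    then show "({u,w} = {u,w'}) = (w = w')" by (auto simp: doubleton_eq_iff)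
  next
    fix w assume "w \<in> nbrs E u" then show "{u,w} \<in> {e\<in>E. u \<in> e}" unfolding nbrs_def by simp
  next
    fix e assume "e \<in> {e\<in>E. u \<in> e}"
    then obtain a b where ab: "e = {a,b}" "e \<in> E" "u \<in> e" using edge by blast
    show "\<exists>w\<in>nbrs E u. e = {u,w}"
    proof (cases "u = a")
      case True then show ?thesis using ab unfolding nbrs_def by auto
    next
      case False
      then have "u = b" using ab by auto
      then have "e = {u,a}" using ab by auto
      then show ?thesis using ab unfolding nbrs_def by auto
    qed
  qed
  have "(\<Sum>e\<in>{e\<in>E. u \<in> e}. labp_x E z e) = (\<Sum>w\<in>nbrs E u. labp_x E z {u,w})"
    using sum.reindex_bij_betw[OF bij, of "labp_x E z"] by simp
  also have "\<dots> = (\<Sum>w\<in>nbrs E u. labp_x_dir E z u w)"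
    by (rule sum.cong[OF refl]) (simp add: labp_x_edge nbrs_def)
  finally show ?thesis using x_sum by simp
qed

end

lemma one_minus_sum_le_prod:
  fixes a :: "'b \<Rightarrow> real"
  assumes "finite S" "\<forall>i\<in>S. 0 \<le> a i \<and> a i \<le> 1"
  shows "1 - sum a S \<le> prod (\<lambda>i. 1 - a i) S"
  using assms
proof (induction S rule: finite_induct)
  case empty then show ?case by simp
next
  case (insert y F)
  have IH: "1 - sum a F \<le> prod (\<lambda>i. 1 - a i) F" using insert by simp
  have ay: "0 \<le> a y" "a y \<le> 1" using insert by auto
  have sF: "0 \<le> sum a F" using insert by (intro sum_nonneg) auto
  have "(1 - a y) * (1 - sum a F) \<le> (1 - a y) * prod (\<lambda>i. 1 - a i) F"
    using IH ay by (intro mult_left_mono) auto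
  moreover have "1 - (a y + sum a F) \<le> (1 - a y) * (1 - sum a F)"
    using ay sF by (simp add: algebra_simps)
  ultimately show ?case using insert by simp
qed

lemma ln_le_sum_ln:
  fixes a :: "'b \<Rightarrow> real"
  assumes "finite S" "\<forall>i\<in>S. 0 \<le> a i \<and> a i < 1" "0 < y" "y \<le> 1 - sum a S"
  shows "ln y \<le> (\<Sum>i\<in>S. ln (1 - a i))"
proof -
  have pp: "0 < prod (\<lambda>i. 1 - a i) S" using assms(2) by (intro prod_pos) auto
  have h: "\<forall>i\<in>S. 0 \<le> a i \<and> a i \<le> 1" using assms(2) by (simp add: less_imp_le)
  have "y \<le> prod (\<lambda>i. 1 - a i) S"
    using assms(4) one_minus_sum_le_prod[OF assms(1) h] by linarith
  then have "ln y \<le> ln (prod (\<lambda>i. 1 - a i) S)" using assms(3) pp by simp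
  also have "\<dots> = (\<Sum>i\<in>S. ln (1 - a i))" using assms(1,2) by (intro ln_prod) auto
  finally show ?thesis .
qed

lemma xlnx_ge: "0 < (t::real) \<Longrightarrow> -1 \<le> t * ln t"
proof -
  assume t: "0 < t"
  have "ln (1/t) \<le> 1/t - 1" using t by (intro ln_le_minus_one) simp
  then have "- ln t \<le> 1/t - 1" using t by (simp add: ln_div)
  then have h: "t * (- ln t) \<le> t * (1/t - 1)" using t by (intro mult_left_mono) auto
  have e1: "t * (1/t - 1) = 1 - t" using t by (simp add: right_diff_distrib)
  have e2: "t * (- ln t) = - (t * ln t)" by simp
  show ?thesis using h e1 e2 t by linarith
qed

lemma lower_bound:
  fixes V :: "'a set" and E M :: "'a set set" and x :: "'a set \<Rightarrow> real" and P :: "'a \<Rightarrow> real"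
    and L :: real and g :: "'a set \<Rightarrow> 'a"
  assumes fV: "finite V"
    and edges: "\<forall>e\<in>E. \<exists>u v. u \<in> V \<and> v \<in> V \<and> u \<noteq> v \<and> e = {u,v}"
    and xb: "\<forall>e\<in>E. 0 < x e \<and> x e < 1"
    and Pp: "\<forall>v\<in>V. 0 < P v"
    and Ps: "\<forall>v\<in>V. P v = 1 - (\<Sum>e\<in>{e\<in>E. v \<in> e}. x e)"
    and rel: "\<forall>e\<in>E. ln (x e) + ln (1 - x e) = L + (\<Sum>w\<in>e. ln (P w))"
    and ME: "M \<subseteq> E" and Mm: "matching M"
    and g: "\<forall>e\<in>M. g e \<in> e"
    and cov: "\<forall>f\<in>E. f \<inter> g ` M \<noteq> {}"
  shows "L * (\<Sum>e\<in>E. x e) - L * card M \<ge> - (real (card E) + real (card V))"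
proof -
  have EV: "\<forall>e\<in>E. e \<subseteq> V" using edges by fastforce
  have fE: "finite E"
  proof -
    have "E \<subseteq> Pow V" using EV by blast
    then show ?thesis using fV finite_subset by blast
  qed
  have fe: "\<forall>e\<in>E. finite e" using edges by auto
  have fM: "finite M" using ME fE finite_subset by blast
  have UM: "\<Union>M \<subseteq> V" using ME EV by blast
  have fUM: "finite (\<Union>M)" using UM fV finite_subset by blast
  have swapE: "(\<Sum>e\<in>E. \<Sum>w\<in>e. h e w) = (\<Sum>w\<in>V. \<Sum>e\<in>{e\<in>E. w \<in> e}. h e w)" for h :: "'a set \<Rightarrow> 'a \<Rightarrow> real"
  proof -
    have "(\<Sum>e\<in>E. \<Sum>w\<in>e. h e w) = (\<Sum>e\<in>E. \<Sum>w\<in>{w\<in>V. w \<in> e}. h e w)"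
    proof (rule sum.cong[OF refl])
      fix e assume "e \<in> E"
      then have "{w\<in>V. w \<in> e} = e" using EV by blast
      then show "(\<Sum>w\<in>e. h e w) = (\<Sum>w\<in>{w\<in>V. w \<in> e}. h e w)" by simp
    qed
    also have "\<dots> = (\<Sum>w\<in>V. \<Sum>e\<in>{e\<in>E. w \<in> e}. h e w)"
      using sum.swap_restrict[OF fE fV, of h "\<lambda>e w. w \<in> e"] by simp
    finally show ?thesis .
  qed
  have A1: "(\<Sum>e\<in>E. x e * (ln (x e) + ln (1 - x e))) = L * (\<Sum>e\<in>E. x e) + (\<Sum>v\<in>V. (1 - P v) * ln (P v))"
  proof -
    have "(\<Sum>e\<in>E. x e * (ln (x e) + ln (1 - x e))) = (\<Sum>e\<in>E. L * x e + (\<Sum>w\<in>e. x e * ln (P w)))"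
      using rel by (intro sum.cong[OF refl]) (simp add: algebra_simps sum_distrib_left)
    also have "\<dots> = L * (\<Sum>e\<in>E. x e) + (\<Sum>e\<in>E. \<Sum>w\<in>e. x e * ln (P w))"
      by (simp add: sum.distrib sum_distrib_left)
    also have "(\<Sum>e\<in>E. \<Sum>w\<in>e. x e * ln (P w)) = (\<Sum>w\<in>V. \<Sum>e\<in>{e\<in>E. w \<in> e}. x e * ln (P w))"
      by (rule swapE)
    also have "\<dots> = (\<Sum>v\<in>V. (1 - P v) * ln (P v))"
      using Ps by (intro sum.cong[OF refl]) (simp add: sum_distrib_right)
    finally show ?thesis .
  qed
  have A2: "(\<Sum>e\<in>M. ln (x e) + ln (1 - x e)) = L * card M + (\<Sum>w\<in>\<Union>M. ln (P w))"
  proof -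
    have "(\<Sum>e\<in>M. ln (x e) + ln (1 - x e)) = (\<Sum>e\<in>M. L + (\<Sum>w\<in>e. ln (P w)))"
      using rel ME by (intro sum.cong[OF refl]) auto
    also have "\<dots> = L * card M + (\<Sum>e\<in>M. \<Sum>w\<in>e. ln (P w))"
      by (simp add: sum.distrib)
    also have "(\<Sum>e\<in>M. \<Sum>w\<in>e. ln (P w)) = (\<Sum>w\<in>\<Union>M. ln (P w))"
    proof -
      have f1: "\<forall>i\<in>M. finite (id i)" using fe ME by auto
      have f2: "\<forall>i\<in>M. \<forall>j\<in>M. i \<noteq> j \<longrightarrow> id i \<inter> id j = {}" using Mm unfolding matching_def by simp
      show ?thesis using sum.UNION_disjoint[OF fM f1 f2, of "\<lambda>w. ln (P w)"] by simp
    qed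
    finally show ?thesis .
  qed
  define T where "T w = (\<Sum>f\<in>{f\<in>E - M. w \<in> f}. ln (1 - x f))" for w
  have finEM: "finite {f\<in>E - M. w \<in> f}" for w using fE by simp
  have xbEM: "\<forall>f\<in>{f\<in>E - M. w \<in> f}. 0 \<le> x f \<and> x f < 1" for w using xb by auto
  have c1: "ln (x e) \<le> T (g e)" if eM: "e \<in> M" for e
  proof -
    define c where "c = g e"
    have ce: "c \<in> e" using g eM unfolding c_def by blast
    have cV: "c \<in> V" using ce eM ME EV by auto
    have seteq: "{f\<in>E. c \<in> f} = insert e {f\<in>E - M. c \<in> f}"
    proof
      show "{f\<in>E. c \<in> f} \<subseteq> insert e {f\<in>E - M. c \<in> f}"
      proof
        fix f assume f: "f \<in> {f\<in>E. c \<in> f}"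
        show "f \<in> insert e {f\<in>E - M. c \<in> f}"
        proof (cases "f \<in> M")
          case True
          then have "f = e" using Mm eM f ce unfolding matching_def by blast
          then show ?thesis by simp
        qed (use f in auto)
      qed
      show "insert e {f\<in>E - M. c \<in> f} \<subseteq> {f\<in>E. c \<in> f}" using eM ME ce by auto
    qed
    have "P c = 1 - (\<Sum>f\<in>{f\<in>E. c \<in> f}. x f)" using Ps cV by simp
    also have "\<dots> = 1 - (x e + (\<Sum>f\<in>{f\<in>E - M. c \<in> f}. x f))"
      unfolding seteq using eM finEM[of c] by (subst sum.insert) auto
    finally have "P c = 1 - (x e + (\<Sum>f\<in>{f\<in>E - M. c \<in> f}. x f))" .
    then have "x e \<le> 1 - (\<Sum>f\<in>{f\<in>E - M. c \<in> f}. x f)" using Pp cV by force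
    then show ?thesis unfolding T_def c_def[symmetric]
      using xb eM ME by (intro ln_le_sum_ln[OF finEM xbEM]) auto
  qed
  have c2: "ln (P v) \<le> T v" if vV: "v \<in> V - \<Union>M" for v
  proof -
    have "{f\<in>E. v \<in> f} = {f\<in>E - M. v \<in> f}" using vV by auto
    then have "P v = 1 - (\<Sum>f\<in>{f\<in>E - M. v \<in> f}. x f)" using Ps vV by simp
    then show ?thesis unfolding T_def using Pp vV by (intro ln_le_sum_ln[OF finEM xbEM]) auto
  qed
  have inj: "inj_on g M"
  proof (rule inj_onI)
    fix e e' assume "e \<in> M" "e' \<in> M" "g e = g e'"
    then have "g e \<in> e \<inter> e'" using g by (metis IntI)
    then show "e = e'" using Mm \<open>e \<in> M\<close> \<open>e' \<in> M\<close> unfolding matching_def by auto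
  qed
  define W where "W = g ` M \<union> (V - \<Union>M)"
  have gV: "g ` M \<subseteq> V" using g ME EV by fastforce
  have gU: "g ` M \<subseteq> \<Union>M" using g by fastforce
  have fW: "finite W" unfolding W_def using fM fV by simp
  have K1: "(\<Sum>e\<in>M. ln (x e)) + (\<Sum>v\<in>V - \<Union>M. ln (P v)) \<le> (\<Sum>w\<in>W. T w)"
  proof -
    have "(\<Sum>e\<in>M. ln (x e)) \<le> (\<Sum>e\<in>M. T (g e))" using c1 by (intro sum_mono) auto
    also have "\<dots> = (\<Sum>w\<in>g ` M. T w)" using sum.reindex[OF inj, of T] by simp
    finally have i1: "(\<Sum>e\<in>M. ln (x e)) \<le> (\<Sum>w\<in>g ` M. T w)" .
    have i2: "(\<Sum>v\<in>V - \<Union>M. ln (P v)) \<le> (\<Sum>v\<in>V - \<Union>M. T v)" using c2 by (intro sum_mono) auto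
    have "(\<Sum>w\<in>W. T w) = (\<Sum>w\<in>g ` M. T w) + (\<Sum>v\<in>V - \<Union>M. T v)"
      unfolding W_def using fM fV gU by (intro sum.union_disjoint) auto
    then show ?thesis using i1 i2 by linarith
  qed
  have K2: "(\<Sum>w\<in>W. T w) \<le> (\<Sum>f\<in>E - M. ln (1 - x f))"
  proof -
    have "(\<Sum>w\<in>W. T w) = (\<Sum>f\<in>E - M. \<Sum>w\<in>{w\<in>W. w \<in> f}. ln (1 - x f))"
      unfolding T_def using sum.swap_restrict[OF fW, of "E - M" "\<lambda>w f. ln (1 - x f)" "\<lambda>w f. w \<in> f"] fE
      by simp
    also have "\<dots> = (\<Sum>f\<in>E - M. real (card {w\<in>W. w \<in> f}) * ln (1 - x f))" by simp
    also have "\<dots> \<le> (\<Sum>f\<in>E - M. ln (1 - x f))"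
    proof (rule sum_mono)
      fix f assume f: "f \<in> E - M"
      have "f \<inter> g ` M \<noteq> {}" using cov f by blast
      then have "{w\<in>W. w \<in> f} \<noteq> {}" unfolding W_def by blast
      then have "1 \<le> card {w\<in>W. w \<in> f}" using fW by (simp add: Suc_le_eq card_gt_0_iff)
      moreover have "ln (1 - x f) \<le> 0" using xb f by (simp add: less_imp_le)
      ultimately have "real (card {w\<in>W. w \<in> f}) * ln (1 - x f) \<le> 1 * ln (1 - x f)"
        by (intro mult_right_mono_neg) auto
      then show "real (card {w\<in>W. w \<in> f}) * ln (1 - x f) \<le> ln (1 - x f)" by simp
    qed
    finally show ?thesis .
  qed
  have T1: "- real (card E) \<le> (\<Sum>e\<in>E. x e * ln (x e))"
  proof -
    have "(\<Sum>e\<in>E. -1) \<le> (\<Sum>e\<in>E. x e * ln (x e))" using xb xlnx_ge by (intro sum_mono) auto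
    then show ?thesis by simp
  qed
  have T2: "- real (card V) \<le> (\<Sum>v\<in>V. P v * ln (P v))"
  proof -
    have "(\<Sum>v\<in>V. -1) \<le> (\<Sum>v\<in>V. P v * ln (P v))" using Pp xlnx_ge by (intro sum_mono) auto
    then show ?thesis by simp
  qed
  have T3: "(\<Sum>e\<in>E. (1 - x e) * ln (1 - x e)) \<le> 0"
  proof (rule sum_nonpos)
    fix e assume "e \<in> E"
    then have "0 < 1 - x e" "ln (1 - x e) \<le> 0" using xb by auto
    then show "(1 - x e) * ln (1 - x e) \<le> 0" by (simp add: mult_nonneg_nonpos)
  qed
  have s1: "(\<Sum>e\<in>E. x e * (ln (x e) + ln (1 - x e))) = (\<Sum>e\<in>E. x e * ln (x e)) + (\<Sum>e\<in>E. x e * ln (1 - x e))"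
    by (simp add: algebra_simps sum.distrib)
  have s2: "(\<Sum>e\<in>E. x e * ln (1 - x e)) = (\<Sum>e\<in>E. ln (1 - x e)) - (\<Sum>e\<in>E. (1 - x e) * ln (1 - x e))"
    by (simp add: algebra_simps sum_subtractf[symmetric])
  have s3: "(\<Sum>e\<in>E. ln (1 - x e)) = (\<Sum>e\<in>M. ln (1 - x e)) + (\<Sum>e\<in>E - M. ln (1 - x e))"
    using sum.subset_diff[OF ME fE, of "\<lambda>e. ln (1 - x e)"] by linarith
  have s4: "(\<Sum>e\<in>M. ln (x e) + ln (1 - x e)) = (\<Sum>e\<in>M. ln (x e)) + (\<Sum>e\<in>M. ln (1 - x e))"
    by (simp add: sum.distrib)
  have s5: "(\<Sum>v\<in>V. (1 - P v) * ln (P v)) = (\<Sum>v\<in>V. ln (P v)) - (\<Sum>v\<in>V. P v * ln (P v))"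
    by (simp add: algebra_simps sum_subtractf[symmetric])
  have s6: "(\<Sum>v\<in>V. ln (P v)) = (\<Sum>v\<in>\<Union>M. ln (P v)) + (\<Sum>v\<in>V - \<Union>M. ln (P v))"
    using sum.subset_diff[OF UM fV, of "\<lambda>v. ln (P v)"] by linarith
  from A1 A2 K1 K2 T1 T2 T3 s1 s2 s3 s4 s5 s6 show ?thesis by linarith
qed

lemma matching_le_cover:
  assumes "matching M'" "M' \<subseteq> E" "finite C'" "\<forall>e\<in>E. e \<inter> C' \<noteq> {}"
  shows "card M' \<le> card C'"
proof -
  define h where "h f = (SOME c. c \<in> f \<and> c \<in> C')" for f
  have hm: "h f \<in> f \<and> h f \<in> C'" if "f \<in> M'" for f
  proof -
    have "\<exists>c. c \<in> f \<and> c \<in> C'" using assms(2,4) that by blast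
    then show ?thesis unfolding h_def by (rule someI_ex)
  qed
  have "inj_on h M'"
  proof (rule inj_onI)
    fix e e' assume a: "e \<in> M'" "e' \<in> M'" "h e = h e'"
    then have "h e \<in> e \<inter> e'" using hm by (metis IntI)
    then show "e = e'" using assms(1) a(1,2) unfolding matching_def by auto
  qed
  moreover have "h ` M' \<subseteq> C'" using hm by auto
  ultimately show ?thesis using card_inj_on_le assms(3) by blast
qed

lemma upper_sum:
  assumes sgz: "sg V E z" and C: "finite C" "\<forall>e\<in>E. e \<inter> C \<noteq> {}"
  shows "(\<Sum>e\<in>E. labp_x E z e) \<le> real (card C)"
proof -
  interpret sg V E z by (rule sgz)
  have xpos: "0 \<le> labp_x E z e" if eE: "e \<in> E" for e
  proof -
    obtain u v where "e = {u,v}" "{u,v} \<in> E" using edge[OF eE] eE by auto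
    then show ?thesis using labp_x_edge x_bounds(1) by (simp add: less_imp_le)
  qed
  have "(\<Sum>e\<in>E. labp_x E z e) \<le> (\<Sum>e\<in>E. real (card {c\<in>C. c \<in> e}) * labp_x E z e)"
  proof (rule sum_mono)
    fix e assume eE: "e \<in> E"
    have "{c\<in>C. c \<in> e} \<noteq> {}" using C(2) eE by blast
    then have "1 \<le> card {c\<in>C. c \<in> e}" using C(1) by (simp add: Suc_le_eq card_gt_0_iff)
    then have "1 * labp_x E z e \<le> real (card {c\<in>C. c \<in> e}) * labp_x E z e"
      using xpos[OF eE] by (intro mult_right_mono) auto
    then show "labp_x E z e \<le> real (card {c\<in>C. c \<in> e}) * labp_x E z e" by simp
  qed
  also have "\<dots> = (\<Sum>e\<in>E. \<Sum>c\<in>{c\<in>C. c \<in> e}. labp_x E z e)" by simp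
  also have "\<dots> = (\<Sum>c\<in>C. \<Sum>e\<in>{e\<in>E. c \<in> e}. labp_x E z e)"
    using sum.swap_restrict[OF fE C(1), of "\<lambda>e c. labp_x E z e" "\<lambda>e c. c \<in> e"] by simp
  also have "\<dots> = (\<Sum>c\<in>C. 1 - Pv E z c)" using vertex_sum by simp
  also have "\<dots> \<le> (\<Sum>c\<in>C. 1)" using P_pos by (intro sum_mono) (simp add: less_imp_le)
  finally show ?thesis by simp
qed

lemma rel_edge:
  assumes sgz: "sg V E z" and eE: "e \<in> E"
  shows "ln (labp_x E z e) + ln (1 - labp_x E z e) = ln z + (\<Sum>w\<in>e. ln (Pv E z w))"
proof -
  interpret sg V E z by (rule sgz)
  obtain u v where uv: "e = {u,v}" "u \<noteq> v" using edge[OF eE] by auto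
  have uvE: "{u,v} \<in> E" using eE uv by simp
  have xe: "labp_x E z e = labp_x_dir E z u v" using labp_x_edge[OF uvE] uv by simp
  have xb: "0 < labp_x_dir E z u v" "labp_x_dir E z u v < 1" using x_bounds[OF uvE] by auto
  have "ln (labp_x E z e) + ln (1 - labp_x E z e) = ln (labp_x_dir E z u v * (1 - labp_x_dir E z u v))"
    unfolding xe using xb by (simp add: ln_mult)
  also have "\<dots> = ln (z * Pv E z u * Pv E z v)" using x_rel[OF uvE] by simp
  also have "\<dots> = ln z + ln (Pv E z u) + ln (Pv E z v)"
  proof -
    have p1: "0 < Pv E z u" "0 < Pv E z v" using P_pos by auto
    have "0 < z * Pv E z u" using z p1 by simp
    then have "ln (z * Pv E z u * Pv E z v) = ln (z * Pv E z u) + ln (Pv E z v)" using z p1 by (simp add: ln_mult)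
    also have "ln (z * Pv E z u) = ln z + ln (Pv E z u)" using z p1 by (simp add: ln_mult)
    finally show ?thesis .
  qed
  also have "\<dots> = ln z + (\<Sum>w\<in>e. ln (Pv E z w))" using uv by simp
  finally show ?thesis .
qed

theorem mainTheorem4:
  fixes V :: "'a set" and E :: "'a set set"
  assumes "simple_graph V E" and "bipartite V E"
  shows "((\<lambda>z. \<Sum>e\<in>E. labp_x E z e) \<longlongrightarrow> real (matching_number E)) at_top
         \<and> matching_number E = vertex_cover_number V E"
proof -
  have fV: "finite V" using assms(1) unfolding simple_graph_def by simp
  have edges: "\<forall>e\<in>E. \<exists>u v. u \<in> V \<and> v \<in> V \<and> u \<noteq> v \<and> e = {u,v}"
    using assms(1) unfolding simple_graph_def by simp
  have EV: "\<forall>e\<in>E. e \<subseteq> V" using edges by fastforce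
  have fE: "finite E"
  proof -
    have "E \<subseteq> Pow V" using EV by blast
    then show ?thesis using fV finite_subset by blast
  qed
  obtain A B where AB: "A \<union> B = V" "A \<inter> B = {}" "\<forall>e\<in>E. \<exists>a\<in>A. \<exists>b\<in>B. e = {a,b}"
    using assms(2) unfolding bipartite_def by blast
  have fA: "finite A" and fB: "finite B" using AB(1) fV by auto
  obtain M C where MC: "M \<subseteq> E" "matching M" "C \<subseteq> A \<union> B" "\<forall>e\<in>E. e \<inter> C \<noteq> {}" "card C \<le> card M"
    using koenig_cover[OF fA fB AB(2) AB(3)] by blast
  have CV: "C \<subseteq> V" using MC(3) AB(1) by simp
  have fC: "finite C" using CV fV finite_subset by blast
  have fM: "finite M" using MC(1) fE finite_subset by blast
  define g where "g e = (SOME c. c \<in> e \<and> c \<in> C)" for e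
  have gm: "g e \<in> e \<and> g e \<in> C" if "e \<in> M" for e
  proof -
    have "\<exists>c. c \<in> e \<and> c \<in> C" using MC(1,4) that by blast
    then show ?thesis unfolding g_def by (rule someI_ex)
  qed
  have inj: "inj_on g M"
  proof (rule inj_onI)
    fix e e' assume a: "e \<in> M" "e' \<in> M" "g e = g e'"
    then have "g e \<in> e \<inter> e'" using gm by (metis IntI)
    then show "e = e'" using MC(2) a(1,2) unfolding matching_def by auto
  qed
  have gC: "g ` M \<subseteq> C" using gm by auto
  have cMC: "card M \<le> card C" using matching_le_cover[OF MC(2) MC(1) fC MC(4)] .
  have cardeq: "card C = card M" using cMC MC(5) by simp
  have gMC: "g ` M = C"
    using card_subset_eq[OF fC gC] card_image[OF inj] cardeq by simp
  have cov: "\<forall>f\<in>E. f \<inter> g ` M \<noteq> {}" using MC(4) gMC by simp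
  have mn: "matching_number E = card M"
    unfolding matching_number_def
  proof (rule Max_eqI)
    have "{card M' |M'. is_matching E M'} \<subseteq> {0..card C}"
    proof
      fix k assume "k \<in> {card M' |M'. is_matching E M'}"
      then obtain M' where "k = card M'" "is_matching E M'" by blast
      then have "matching M'" "M' \<subseteq> E" unfolding is_matching_def matching_def by auto
      then show "k \<in> {0..card C}" using matching_le_cover[OF _ _ fC MC(4)] \<open>k = card M'\<close> by auto
    qed
    then show "finite {card M' |M'. is_matching E M'}" using finite_subset by blast
  next
    fix y assume "y \<in> {card M' |M'. is_matching E M'}"
    then obtain M' where "y = card M'" "is_matching E M'" by blast
    then have "matching M'" "M' \<subseteq> E" unfolding is_matching_def matching_def by auto
    then show "y \<le> card M" using matching_le_cover[OF _ _ fC MC(4)] \<open>y = card M'\<close> cardeq by auto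
  next
    show "card M \<in> {card M' |M'. is_matching E M'}"
      using MC(1,2) unfolding is_matching_def matching_def by blast
  qed
  have vc: "vertex_cover_number V E = card M"
    unfolding vertex_cover_number_def
  proof (rule Min_eqI)
    have "{card C' |C'. is_vertex_cover V E C'} \<subseteq> {0..card V}"
    proof
      fix k assume "k \<in> {card C' |C'. is_vertex_cover V E C'}"
      then obtain C' where "k = card C'" "is_vertex_cover V E C'" by blast
      then show "k \<in> {0..card V}" unfolding is_vertex_cover_def using fV card_mono by auto
    qed
    then show "finite {card C' |C'. is_vertex_cover V E C'}" using finite_subset by blast
  next
    fix y assume "y \<in> {card C' |C'. is_vertex_cover V E C'}"
    then obtain C' where y: "y = card C'" "is_vertex_cover V E C'" by blast
    then have "finite C'" "\<forall>e\<in>E. e \<inter> C' \<noteq> {}" unfolding is_vertex_cover_def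
      using fV finite_subset by auto
    then show "card M \<le> y" using matching_le_cover[OF MC(2) MC(1)] y(1) by auto
  next
    have "is_vertex_cover V E C" unfolding is_vertex_cover_def using CV MC(4) by auto
    then show "card M \<in> {card C' |C'. is_vertex_cover V E C'}"
      using cardeq by force
  qed
  define K where "K = real (card E) + real (card V)"
  have low: "real (card M) - K / ln z \<le> (\<Sum>e\<in>E. labp_x E z e)" if z1: "1 < z" for z
  proof -
    have z0: "0 < z" using z1 by simp
    have sgz: "sg V E z" by unfold_locales (use assms(1) z0 in auto)
    interpret sg V E z by (rule sgz)
    have xb: "\<forall>e\<in>E. 0 < labp_x E z e \<and> labp_x E z e < 1"
    proof
      fix e assume eE: "e \<in> E"
      obtain u v where "e = {u,v}" using edge[OF eE] by auto
      then show "0 < labp_x E z e \<and> labp_x E z e < 1"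
        using labp_x_edge x_bounds eE by simp
    qed
    have Pp: "\<forall>v\<in>V. 0 < Pv E z v" using P_pos by simp
    have Ps: "\<forall>v\<in>V. Pv E z v = 1 - (\<Sum>e\<in>{e\<in>E. v \<in> e}. labp_x E z e)" using vertex_sum by simp
    have rel: "\<forall>e\<in>E. ln (labp_x E z e) + ln (1 - labp_x E z e) = ln z + (\<Sum>w\<in>e. ln (Pv E z w))"
      using rel_edge[OF sgz] by blast
    have "ln z * (\<Sum>e\<in>E. labp_x E z e) - ln z * card M \<ge> - K"
      unfolding K_def
      by (rule lower_bound[OF fV edges xb Pp Ps rel MC(1) MC(2) _ cov]) (use gm in blast)
    moreover have lz: "0 < ln z" using z1 by simp
    ultimately have h: "ln z * real (card M) \<le> K + ln z * (\<Sum>e\<in>E. labp_x E z e)" by simp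
    define S where "S = (\<Sum>e\<in>E. labp_x E z e)"
    have "real (card M) \<le> (K + ln z * S) / ln z" using h lz unfolding S_def[symmetric]
      by (simp add: pos_le_divide_eq mult.commute)
    also have "\<dots> = K / ln z + S" using lz by (simp add: add_divide_distrib)
    finally show ?thesis unfolding S_def by linarith
  qed
  have upp: "(\<Sum>e\<in>E. labp_x E z e) \<le> real (card M)" if z1: "1 < z" for z
  proof -
    have sgz: "sg V E z" by unfold_locales (use assms(1) z1 in auto)
    show ?thesis using upper_sum[OF sgz fC MC(4)] cardeq by simp
  qed
  have lim1: "((\<lambda>z. real (card M) - K / ln z) \<longlongrightarrow> real (card M) - 0) at_top"
    by (intro tendsto_diff tendsto_const tendsto_divide_0[OF tendsto_const]
        filterlim_at_top_imp_at_infinity ln_at_top)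
  have "((\<lambda>z. \<Sum>e\<in>E. labp_x E z e) \<longlongrightarrow> real (card M)) at_top"
  proof (rule real_tendsto_sandwich[OF _ _ _ tendsto_const])
    show "\<forall>\<^sub>F z in at_top. real (card M) - K / ln z \<le> (\<Sum>e\<in>E. labp_x E z e)"
      using eventually_gt_at_top[of 1] by eventually_elim (rule low)
    show "\<forall>\<^sub>F z in at_top. (\<Sum>e\<in>E. labp_x E z e) \<le> real (card M)"
      using eventually_gt_at_top[of 1] by eventually_elim (rule upp)
    show "((\<lambda>z. real (card M) - K / ln z) \<longlongrightarrow> real (card M)) at_top" using lim1 by simp
  qed
  then show ?thesis using mn vc by simp
qed

end
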